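(* In the block regularized minimum distance (RMD) setting of the context, suppose conditions (B1)–(B4) hold. If $\|\boldsymbol\theta_0\|_1^{(d,\tilde d)}\le K$ and the regularization parameter satisfies $\gamma_n\lesssim(K+1)\epsilon_{n1}+\epsilon_2$, then with probability at least $1-(\delta_{n1}+\delta_{n2})$ the block RMD estimator $\widehat{\boldsymbol\theta}$ satisfies $$\|\widehat{\boldsymbol\theta}-\boldsymbol\theta_0\|_1^{(d,\tilde d)}\lesssim s\mu^{-2}\{(K+1)\epsilon_{n1}+\epsilon_2\}.$$
   Context: Block norms: for a block matrix $\mathbf B=(\mathbf B_{ij})_{i\in[N_1],j\in[N_2]}$ with blocks $\mathbf B_{ij}\in\mathbb R^{m_1\times m_2}$, $\|\mathbf B\|^{(m_1,m_2)}_{\max}=\max_{i,j}\|\mathbf B_{ij}\|_F$; if $N_2=1$, $\|\mathbf B\|^{(m_1,m_2)}_1=\sum_i\|\mathbf B_i\|_F$. Setting: integers $p,d,\tilde d,L\ge1$, $q=pL$. The unknown $\boldsymbol\theta_0=(\boldsymbol\theta_{01}^{\mathrm T},\dots,\boldsymbol\theta_{0p}^{\mathrm T})^{\mathrm T}\in\mathbb R^{pd\times\tilde d}$, $\boldsymbol\theta_{0j}\in\mathbb R^{d\times\tilde d}$, is block $s$-sparse: $S=\{j:\|\boldsymbol\theta_{0j}\|_F\ne0\}$, $s=|S|$. There are a matrix $\mathbf G\in\mathbb R^{qd\times pd}$ (viewed as $q\times p$ blocks of size $d\times d$), $\mathbf g(\mathbf 0)\in\mathbb R^{qd\times\tilde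 d}$ and a bias $\mathbf R\in\mathbb R^{qd\times\tilde d}$ with $\mathbf G\boldsymbol\theta_0+\mathbf g(\mathbf 0)+\mathbf R=\mathbf 0$; write $\mathbf g(\boldsymbol\theta)=\mathbf G\boldsymbol\theta+\mathbf g(\mathbf 0)$. Given random empirical versions $\widehat{\mathbf G},\widehat{\mathbf g}(\mathbf 0)$ and $\widehat{\mathbf g}(\boldsymbol\theta)=\widehat{\mathbf G}\boldsymbol\theta+\widehat{\mathbf g}(\mathbf 0)$, the block RMD estimator is a solution $$\widehat{\boldsymbol\theta}\in\arg\min_{\boldsymbol\theta\in\mathbb R^{pd\times\tilde d}}\|\boldsymbol\theta\|_1^{(d,\tilde d)}\ \text{ subject to }\ \|\widehat{\mathbf g}(\boldsymbol\theta)\|^{(d,\tilde d)}_{\max}\le\gamma_n,$$ with $\gamma_n\ge0$. For $J\subset[q]$, $M\subset[p]$, $\mathbf G_{J,M}$ is the block submatrix with block rows in $J$ and block columns in $M$; $\sigma_{\min}(m,\mathbf G)=\min_{|M|\le m}\max_{|J|\le m}\sigma_{\min}(\mathbf G_{J,M})$ and $\sigma_{\max}(m,\mathbf G)=\max_{|M|\le m}\max_{|J|\le m}\sigma_{\max}(\mathbf G_{J,M})$, where $\sigma_{\min},\sigma_{\max}$ denote smallest and largest singular values. Conditions: (B1) there are $\epsilon_{n1},\delta_{n1}>0$ with $\|\widehat{\mathbf G}-\mathbf G\|^{(d,d)}_{\max}\vee\|\widehat{\mathbf g}(\mathbf 0)-\mathbf g(\mathbf 0)\|^{(d,\tilde d)}_{\max}\le\epsilon_{n1}$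 with probability at least $1-\delta_{n1}$. (B2) $\|\mathbf R\|^{(d,\tilde d)}_{\max}\le\epsilon_2$ for some $\epsilon_2>0$. (B3) there is $\delta_{n2}>0$ with $\|\widehat{\mathbf g}(\boldsymbol\theta_0)\|^{(d,\tilde d)}_{\max}\le\gamma_n$ with probability at least $1-\delta_{n2}$. (B4) there are a universal constant $c_5>0$ and $\mu>0$ with $\sigma_{\max}(m,\mathbf G)\ge c_5$ and $\sigma_{\min}(m,\mathbf G)/\sigma_{\max}(m,\mathbf G)\ge\mu$ for $m=16s/\mu^2$. The symbol $\lesssim$ hides constants independent of $(n,p,d,s,K,\mu)$. *)

theory Defs
  imports "HOL-Probability.Probability"
begin

text \<open>Matrices are functions nat => nat => real; only the entries inside the stated
  index ranges are ever used. Blocks are indexed from 0.\<close>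

definition block_fro :: "nat \<Rightarrow> nat \<Rightarrow> (nat \<Rightarrow> nat \<Rightarrow> real) \<Rightarrow> nat \<Rightarrow> nat \<Rightarrow> real" where
  "block_fro m1 m2 B i j = sqrt (\<Sum>a<m1. \<Sum>b<m2. (B (i * m1 + a) (j * m2 + b))\<^sup>2)"

definition bmax :: "nat \<Rightarrow> nat \<Rightarrow> nat \<Rightarrow> nat \<Rightarrow> (nat \<Rightarrow> nat \<Rightarrow> real) \<Rightarrow> real" where
  "bmax m1 m2 N1 N2 B = Max {block_fro m1 m2 B i j | i j. i < N1 \<and> j < N2}"

definition bnorm1 :: "nat \<Rightarrow> nat \<Rightarrow> nat \<Rightarrow> (nat \<Rightarrow> nat \<Rightarrow> real) \<Rightarrow> real" where
  "bnorm1 m1 m2 N1 B = (\<Sum>i<N1. block_fro m1 m2 B i 0)"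

text \<open>Affine map g(theta) = G theta + g(0), with inner dimension n.\<close>
definition gfun :: "(nat \<Rightarrow> nat \<Rightarrow> real) \<Rightarrow> (nat \<Rightarrow> nat \<Rightarrow> real) \<Rightarrow> nat \<Rightarrow> (nat \<Rightarrow> nat \<Rightarrow> real) \<Rightarrow> nat \<Rightarrow> nat \<Rightarrow> real" where
  "gfun G g0 n \<theta> = (\<lambda>i k. (\<Sum>j<n. G i j * \<theta> j k) + g0 i k)"

definition mdiff :: "(nat \<Rightarrow> nat \<Rightarrow> real) \<Rightarrow> (nat \<Rightarrow> nat \<Rightarrow> real) \<Rightarrow> nat \<Rightarrow> nat \<Rightarrow> real" where
  "mdiff A B = (\<lambda>i k. A i k - B i k)"

definition blk_idx :: "nat \<Rightarrow> nat set \<Rightarrow> nat set" where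
  "blk_idx d J = (\<lambda>(j, a). j * d + a) ` (J \<times> {..<d})"

text \<open>Smallest / largest singular value of the block submatrix G_{J,M}, as
  inf / sup of ||G_{J,M} x|| over unit vectors x.\<close>
definition smin_sub :: "nat \<Rightarrow> (nat \<Rightarrow> nat \<Rightarrow> real) \<Rightarrow> nat set \<Rightarrow> nat set \<Rightarrow> real" where
  "smin_sub d G J M = Inf {sqrt (\<Sum>r\<in>blk_idx d J. (\<Sum>c\<in>blk_idx d M. G r c * x c)\<^sup>2) | x.
       (\<Sum>c\<in>blk_idx d M. (x c)\<^sup>2) = 1}"

definition smax_sub :: "nat \<Rightarrow> (nat \<Rightarrow> nat \<Rightarrow> real) \<Rightarrow> nat set \<Rightarrow> nat set \<Rightarrow> real" where
  "smax_sub d G J M = Sup {sqrt (\<Sum>r\<in>blk_idx d J. (\<Sum>c\<in>blk_idx d M. G r c * x c)\<^sup>2) | x.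
       (\<Sum>c\<in>blk_idx d M. (x c)\<^sup>2) = 1}"

text \<open>sigma_min(m, G) and sigma_max(m, G) for G with q x p blocks of size d x d;
  M ranges over nonempty sets of block columns, J over sets of block rows.\<close>
definition sigma_min_m :: "nat \<Rightarrow> nat \<Rightarrow> nat \<Rightarrow> real \<Rightarrow> (nat \<Rightarrow> nat \<Rightarrow> real) \<Rightarrow> real" where
  "sigma_min_m d p q m G =
     Min ((\<lambda>M. Max ((\<lambda>J. smin_sub d G J M) ` {J. J \<subseteq> {..<q} \<and> real (card J) \<le> m}))
          ` {M. M \<subseteq> {..<p} \<and> M \<noteq> {} \<and> real (card M) \<le> m})"

definition sigma_max_m :: "nat \<Rightarrow> nat \<Rightarrow> nat \<Rightarrow> real \<Rightarrow> (nat \<Rightarrow> nat \<Rightarrow> real) \<Rightarrow> real" where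
  "sigma_max_m d p q m G =
     Max ((\<lambda>M. Max ((\<lambda>J. smax_sub d G J M) ` {J. J \<subseteq> {..<q} \<and> real (card J) \<le> m}))
          ` {M. M \<subseteq> {..<p} \<and> M \<noteq> {} \<and> real (card M) \<le> m})"

definition is_block_rmd :: "nat \<Rightarrow> nat \<Rightarrow> nat \<Rightarrow> nat \<Rightarrow> (nat \<Rightarrow> nat \<Rightarrow> real) \<Rightarrow> (nat \<Rightarrow> nat \<Rightarrow> real)
     \<Rightarrow> real \<Rightarrow> (nat \<Rightarrow> nat \<Rightarrow> real) \<Rightarrow> bool" where
  "is_block_rmd p q d dt Gh gh0 \<gamma> \<theta> \<longleftrightarrow>
     bmax d dt q 1 (gfun Gh gh0 (p * d) \<theta>) \<le> \<gamma> \<and>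
     (\<forall>\<theta>'. bmax d dt q 1 (gfun Gh gh0 (p * d) \<theta>') \<le> \<gamma> \<longrightarrow> bnorm1 d dt p \<theta> \<le> bnorm1 d dt p \<theta>')"

end

theory Submission
  imports Defs
begin


lemma block_fro_L2:
  "block_fro m1 m2 B i j = L2_set (\<lambda>(a,b). B (i*m1+a) (j*m2+b)) ({..<m1}\<times>{..<m2})"
  unfolding block_fro_def L2_set_def by (simp add: sum.cartesian_product split_def)

lemma block_fro_nonneg: "0 \<le> block_fro m1 m2 B i j"
  by (simp add: block_fro_L2)

lemma block_fro_add:
  "block_fro m1 m2 (\<lambda>r c. A r c + B r c) i j \<le> block_fro m1 m2 A i j + block_fro m1 m2 B i j"
  unfolding block_fro_L2 using L2_set_triangle_ineq[of "\<lambda>(a,b). A (i*m1+a) (j*m2+b)" "\<lambda>(a,b). B (i*m1+a) (j*m2+b)"]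
  by (simp add: split_def)

lemma block_fro_uminus:
  "block_fro m1 m2 (\<lambda>r c. - A r c) i j = block_fro m1 m2 A i j"
  unfolding block_fro_def by simp

lemma block_fro_mdiff_le:
  "block_fro m1 m2 (mdiff A B) i j \<le> block_fro m1 m2 A i j + block_fro m1 m2 B i j"
  using block_fro_add[of m1 m2 A "\<lambda>r c. - B r c" i j] unfolding mdiff_def
  by (simp add: block_fro_uminus)

lemma block_fro_le_mdiff:
  "block_fro m1 m2 A i j \<le> block_fro m1 m2 (mdiff A B) i j + block_fro m1 m2 B i j"
proof -
  have "A = (\<lambda>r c. mdiff A B r c + B r c)" by (simp add: mdiff_def)
  then have "block_fro m1 m2 A i j = block_fro m1 m2 (\<lambda>r c. mdiff A B r c + B r c) i j" by simp
  also have "\<dots> \<le> block_fro m1 m2 (mdiff A B) i j + block_fro m1 m2 B i j" by (rule block_fro_add)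
  finally show ?thesis .
qed

lemma block_fro_zero:
  assumes "block_fro m1 m2 B i j = 0" "a < m1" "b < m2"
  shows "B (i*m1+a) (j*m2+b) = 0"
proof -
  have "L2_set (\<lambda>(a,b). B (i*m1+a) (j*m2+b)) ({..<m1}\<times>{..<m2}) = 0"
    using assms(1) by (simp add: block_fro_L2)
  then show ?thesis using assms(2,3) by (subst (asm) L2_set_eq_0_iff) auto
qed

lemma block_fro_cong:
  assumes "\<And>a b. a < m1 \<Longrightarrow> b < m2 \<Longrightarrow> A (i*m1+a) (j*m2+b) = B (i*m1+a) (j*m2+b)"
  shows "block_fro m1 m2 A i j = block_fro m1 m2 B i j"
  unfolding block_fro_def using assms by (intro arg_cong[where f=sqrt] sum.cong) auto

lemma le_bmax:
  assumes "i < N1" "j < N2"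
  shows "block_fro m1 m2 B i j \<le> bmax m1 m2 N1 N2 B"
proof -
  have "finite {block_fro m1 m2 B i j | i j. i < N1 \<and> j < N2}"
    using finite_image_set2[of "\<lambda>i. i < N1" "\<lambda>j. j < N2" "\<lambda>i j. block_fro m1 m2 B i j"] by simp
  then show ?thesis unfolding bmax_def using assms by (intro Max_ge) auto
qed

lemma L2_set_sum_le:
  "L2_set (\<lambda>x. \<Sum>i\<in>I. f i x) A \<le> (\<Sum>i\<in>I. L2_set (f i) A)"
proof (induction I rule: infinite_finite_induct)
  case (infinite I) then show ?case by (simp add: L2_set_def)
next
  case empty then show ?case by (simp add: L2_set_def)
next
  case (insert a I)
  have "L2_set (\<lambda>x. \<Sum>i\<in>insert a I. f i x) A = L2_set (\<lambda>x. f a x + (\<Sum>i\<in>I. f i x)) A"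
    using insert by simp
  also have "\<dots> \<le> L2_set (f a) A + L2_set (\<lambda>x. \<Sum>i\<in>I. f i x) A" by (rule L2_set_triangle_ineq)
  also have "\<dots> \<le> L2_set (f a) A + (\<Sum>i\<in>I. L2_set (f i) A)" using insert by simp
  finally show ?case using insert by simp
qed

lemma L2_set_prod:
  assumes "finite R" "finite K"
  shows "L2_set (\<lambda>(r,k). F r k) (R \<times> K) = L2_set (\<lambda>k. L2_set (\<lambda>r. F r k) R) K"
proof -
  have "(\<Sum>x\<in>R\<times>K. (case x of (r,k) \<Rightarrow> F r k)\<^sup>2) = (\<Sum>r\<in>R. \<Sum>k\<in>K. (F r k)\<^sup>2)"
    by (simp add: sum.cartesian_product split_def)
  also have "\<dots> = (\<Sum>k\<in>K. \<Sum>r\<in>R. (F r k)\<^sup>2)" by (rule sum.swap)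
  also have "\<dots> = (\<Sum>k\<in>K. (L2_set (\<lambda>r. F r k) R)\<^sup>2)"
    unfolding L2_set_def by (simp add: sum_nonneg)
  finally show ?thesis unfolding L2_set_def[of _ "R\<times>K"] L2_set_def[of _ K] by simp
qed

lemma blk_idx_finite: "finite M \<Longrightarrow> finite (blk_idx d M)"
  unfolding blk_idx_def by simp

lemma blk_idx_inj: "inj_on (\<lambda>(j, a). j * d + a) (M \<times> {..<d::nat})"
proof (rule inj_onI, clarsimp)
  fix j a j' a' assume "j*d+a = j'*d+a'" "a < d" "a' < d"
  then have "(j*d+a) div d = (j'*d+a') div d" "(j*d+a) mod d = (j'*d+a') mod d" by simp_all
  then show "j = j' \<and> a = a'" using \<open>a<d\<close> \<open>a'<d\<close> by simp
qed

lemma sum_blk_idx: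
  assumes "finite M"
  shows "(\<Sum>c\<in>blk_idx d M. h c) = (\<Sum>j\<in>M. \<Sum>e<d. h (j*d+e))"
proof -
  have "(\<Sum>c\<in>blk_idx d M. h c) = (\<Sum>x\<in>M \<times> {..<d}. h ((\<lambda>(j, a). j * d + a) x))"
    unfolding blk_idx_def by (rule sum.reindex[OF blk_idx_inj, unfolded comp_def])
  also have "\<dots> = (\<Sum>j\<in>M. \<Sum>e<d. h (j*d+e))"
    by (subst sum.cartesian_product) (simp add: split_def)
  finally show ?thesis .
qed

lemma blk_idx_lessThan: "blk_idx d {..<p} = {..<p*d}"
proof (cases "d = 0")
  case True then show ?thesis by (simp add: blk_idx_def)
next
  case False
  show ?thesis
  proof
    show "blk_idx d {..<p} \<subseteq> {..<p*d}"
    proof (clarsimp simp: blk_idx_def)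
      fix j e assume "j < p" "e < d"
      then have "j*d+e < j*d + d" by simp
      also have "\<dots> = (j+1)*d" by simp
      also have "\<dots> \<le> p*d" using \<open>j<p\<close> by (intro mult_right_mono) auto
      finally show "j*d+e < p*d" .
    qed
    show "{..<p*d} \<subseteq> blk_idx d {..<p}"
    proof
      fix c assume "c \<in> {..<p*d}"
      then have "c div d < p" using False by (simp add: div_less_iff_less_mult)
      moreover have "c mod d < d" using False by simp
      moreover have "c = (c div d)*d + c mod d" by simp
      ultimately show "c \<in> blk_idx d {..<p}" unfolding blk_idx_def
        by (auto intro!: image_eqI[where x="(c div d, c mod d)"])
    qed
  qed
qed

lemma sum_lessThan_blocks:
  "(\<Sum>c<p*d. h c) = (\<Sum>j<p. \<Sum>e<d. h (j*d+e))" for p d :: nat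
  using sum_blk_idx[where M="{..<p}" and d=d and h=h] by (simp add: blk_idx_lessThan)



lemma L2_prod_mult:
  fixes X Y :: "nat \<Rightarrow> nat \<Rightarrow> real"
  assumes "finite A" "finite B" "finite E"
  shows "L2_set (\<lambda>(a,b). \<Sum>e\<in>E. X a e * Y e b) (A\<times>B)
     \<le> L2_set (\<lambda>(a,e). X a e) (A\<times>E) * L2_set (\<lambda>(e,b). Y e b) (E\<times>B)"
proof -
  have l: "(L2_set (\<lambda>(a,b). F a b) (S\<times>T))\<^sup>2 = (\<Sum>a\<in>S. \<Sum>b\<in>T. (F a b)\<^sup>2)" for F :: "nat \<Rightarrow> nat \<Rightarrow> real" and S T
    unfolding L2_set_def by (simp add: sum_nonneg sum.cartesian_product split_def)
  have "(L2_set (\<lambda>(a,b). \<Sum>e\<in>E. X a e * Y e b) (A\<times>B))\<^sup>2 = (\<Sum>a\<in>A. \<Sum>b\<in>B. (\<Sum>e\<in>E. X a e * Y e b)\<^sup>2)"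
    by (rule l)
  also have "\<dots> \<le> (\<Sum>a\<in>A. \<Sum>b\<in>B. (\<Sum>e\<in>E. (X a e)\<^sup>2) * (\<Sum>e\<in>E. (Y e b)\<^sup>2))"
    by ((rule sum_mono)+, rule Cauchy_Schwarz_ineq_sum)
  also have "\<dots> = (\<Sum>a\<in>A. \<Sum>e\<in>E. (X a e)\<^sup>2) * (\<Sum>b\<in>B. \<Sum>e\<in>E. (Y e b)\<^sup>2)"
    by (rule sum_product[symmetric])
  also have "\<dots> = (L2_set (\<lambda>(a,e). X a e) (A\<times>E))\<^sup>2 * (L2_set (\<lambda>(e,b). Y e b) (E\<times>B))\<^sup>2"
  proof -
    have sw: "(\<Sum>b\<in>B. \<Sum>e\<in>E. (Y e b)\<^sup>2) = (\<Sum>e\<in>E. \<Sum>b\<in>B. (Y e b)\<^sup>2)" by (rule sum.swap)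
    show ?thesis unfolding l sw by (simp only: power_mult_distrib)
  qed
  also have "\<dots> = (L2_set (\<lambda>(a,e). X a e) (A\<times>E) * L2_set (\<lambda>(e,b). Y e b) (E\<times>B))\<^sup>2"
    by (simp add: power_mult_distrib)
  finally show ?thesis
    by (rule power2_le_imp_le) (simp add: mult_nonneg_nonneg)
qed

lemma block_prod_bound:
  fixes A T :: "nat \<Rightarrow> nat \<Rightarrow> real"
  shows "block_fro d dt (\<lambda>r k. \<Sum>c<p*d. A r c * T c k) i 0
      \<le> (\<Sum>j<p. block_fro d d A i j * block_fro d dt T j 0)"
proof -
  have "block_fro d dt (\<lambda>r k. \<Sum>c<p*d. A r c * T c k) i 0
     = L2_set (\<lambda>(a,b). \<Sum>j<p. \<Sum>e<d. A (i*d+a) (j*d+e) * T (j*d+e) b) ({..<d}\<times>{..<dt})"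
    unfolding block_fro_L2 by (simp add: sum_lessThan_blocks)
  also have "\<dots> = L2_set (\<lambda>x. \<Sum>j<p. (\<lambda>(a,b). \<Sum>e<d. A (i*d+a) (j*d+e) * T (j*d+e) b) x) ({..<d}\<times>{..<dt})"
    by (simp add: split_def)
  also have "\<dots> \<le> (\<Sum>j<p. L2_set (\<lambda>(a,b). \<Sum>e<d. A (i*d+a) (j*d+e) * T (j*d+e) b) ({..<d}\<times>{..<dt}))"
    by (rule L2_set_sum_le)
  also have "\<dots> \<le> (\<Sum>j<p. block_fro d d A i j * block_fro d dt T j 0)"
  proof (rule sum_mono)
    fix j
    show "L2_set (\<lambda>(a,b). \<Sum>e<d. A (i*d+a) (j*d+e) * T (j*d+e) b) ({..<d}\<times>{..<dt})
         \<le> block_fro d d A i j * block_fro d dt T j 0"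
      unfolding block_fro_L2
      using L2_prod_mult[of "{..<d}" "{..<dt}" "{..<d}" "\<lambda>a e. A (i*d+a) (j*d+e)" "\<lambda>e b. T (j*d+e) b"]
      by simp
  qed
  finally show ?thesis .
qed

lemma col_low:
  fixes x :: "nat \<Rightarrow> real"
  shows "smin_sub d G J M * sqrt (\<Sum>c\<in>blk_idx d M. (x c)\<^sup>2)
     \<le> sqrt (\<Sum>r\<in>blk_idx d J. (\<Sum>c\<in>blk_idx d M. G r c * x c)\<^sup>2)"
proof -
  define C where "C = blk_idx d M"
  define R where "R = blk_idx d J"
  define n where "n = sqrt (\<Sum>c\<in>C. (x c)\<^sup>2)"
  define V where "V = sqrt (\<Sum>r\<in>R. (\<Sum>c\<in>C. G r c * x c)\<^sup>2)"
  have n0: "n \<ge> 0" unfolding n_def by (simp add: sum_nonneg)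
  show ?thesis
  proof (cases "n = 0")
    case True
    then show ?thesis unfolding C_def[symmetric] R_def[symmetric] n_def[symmetric] by (simp add: sum_nonneg)
  next
    case False
    then have npos: "n > 0" using n0 by simp
    have nsq: "n\<^sup>2 = (\<Sum>c\<in>C. (x c)\<^sup>2)" unfolding n_def by (simp add: sum_nonneg)
    define y where "y = (\<lambda>c. x c / n)"
    have y1: "(\<Sum>c\<in>C. (y c)\<^sup>2) = 1"
      unfolding y_def using npos by (simp add: power_divide nsq[symmetric] flip: sum_divide_distrib)
    have "sqrt (\<Sum>r\<in>R. (\<Sum>c\<in>C. G r c * y c)\<^sup>2) = sqrt ((\<Sum>r\<in>R. (\<Sum>c\<in>C. G r c * x c)\<^sup>2) / n\<^sup>2)"
    proof -
      have e: "\<And>r. (\<Sum>c\<in>C. G r c * x c / n) = (\<Sum>c\<in>C. G r c * x c) / n"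
        by (simp add: sum_divide_distrib)
      show ?thesis unfolding y_def times_divide_eq_right e power_divide by (simp only: sum_divide_distrib)
    qed
    also have "\<dots> = V / n" unfolding V_def using npos by (simp add: real_sqrt_divide)
    finally have Vy: "sqrt (\<Sum>r\<in>R. (\<Sum>c\<in>C. G r c * y c)\<^sup>2) = V / n" .
    have mem: "V / n \<in> {sqrt (\<Sum>r\<in>R. (\<Sum>c\<in>C. G r c * x c)\<^sup>2) | x. (\<Sum>c\<in>C. (x c)\<^sup>2) = 1}"
      using Vy y1 by (intro CollectI exI[of _ y]) simp
    have "smin_sub d G J M \<le> V / n"
      unfolding smin_sub_def C_def[symmetric] R_def[symmetric]
      by (rule cInf_lower[OF mem]) (rule bdd_belowI[of _ 0], auto simp: sum_nonneg)
    then show ?thesis using npos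
      unfolding C_def[symmetric] R_def[symmetric] n_def[symmetric] V_def[symmetric]
      by (simp add: pos_le_divide_eq)
  qed
qed

lemma col_up:
  fixes x :: "nat \<Rightarrow> real"
  assumes "finite M"
  shows "sqrt (\<Sum>r\<in>blk_idx d J. (\<Sum>c\<in>blk_idx d M. G r c * x c)\<^sup>2)
     \<le> smax_sub d G J M * sqrt (\<Sum>c\<in>blk_idx d M. (x c)\<^sup>2)"
proof -
  define C where "C = blk_idx d M"
  define R where "R = blk_idx d J"
  have finC: "finite C" unfolding C_def using assms by (rule blk_idx_finite)
  define n where "n = sqrt (\<Sum>c\<in>C. (x c)\<^sup>2)"
  define V where "V = sqrt (\<Sum>r\<in>R. (\<Sum>c\<in>C. G r c * x c)\<^sup>2)"
  have n0: "n \<ge> 0" unfolding n_def by (simp add: sum_nonneg)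
  show ?thesis
  proof (cases "n = 0")
    case True
    then have "(\<Sum>c\<in>C. (x c)\<^sup>2) = 0" unfolding n_def by simp
    then have "\<forall>c\<in>C. x c = 0" using finC by (simp add: sum_nonneg_eq_0_iff)
    then have "V = 0" unfolding V_def by simp
    then show ?thesis using True
      unfolding C_def[symmetric] R_def[symmetric] n_def[symmetric] V_def[symmetric] by simp
  next
    case False
    then have npos: "n > 0" using n0 by simp
    have nsq: "n\<^sup>2 = (\<Sum>c\<in>C. (x c)\<^sup>2)" unfolding n_def by (simp add: sum_nonneg)
    define y where "y = (\<lambda>c. x c / n)"
    have y1: "(\<Sum>c\<in>C. (y c)\<^sup>2) = 1"
      unfolding y_def using npos by (simp add: power_divide nsq[symmetric] flip: sum_divide_distrib)
    have "sqrt (\<Sum>r\<in>R. (\<Sum>c\<in>C. G r c * y c)\<^sup>2) = sqrt ((\<Sum>r\<in>R. (\<Sum>c\<in>C. G r c * x c)\<^sup>2) / n\<^sup>2)"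
    proof -
      have e: "\<And>r. (\<Sum>c\<in>C. G r c * x c / n) = (\<Sum>c\<in>C. G r c * x c) / n"
        by (simp add: sum_divide_distrib)
      show ?thesis unfolding y_def times_divide_eq_right e power_divide by (simp only: sum_divide_distrib)
    qed
    also have "\<dots> = V / n" unfolding V_def using npos by (simp add: real_sqrt_divide)
    finally have Vy: "sqrt (\<Sum>r\<in>R. (\<Sum>c\<in>C. G r c * y c)\<^sup>2) = V / n" .
    have mem: "V / n \<in> {sqrt (\<Sum>r\<in>R. (\<Sum>c\<in>C. G r c * x c)\<^sup>2) | x. (\<Sum>c\<in>C. (x c)\<^sup>2) = 1}"
      using Vy y1 by (intro CollectI exI[of _ y]) simp
    have bdd: "bdd_above {sqrt (\<Sum>r\<in>R. (\<Sum>c\<in>C. G r c * x c)\<^sup>2) | x. (\<Sum>c\<in>C. (x c)\<^sup>2) = 1}"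
    proof (rule bdd_aboveI, clarify)
      fix z :: "nat \<Rightarrow> real" assume z1: "(\<Sum>c\<in>C. (z c)\<^sup>2) = 1"
      have "(\<Sum>r\<in>R. (\<Sum>c\<in>C. G r c * z c)\<^sup>2) \<le> (\<Sum>r\<in>R. (\<Sum>c\<in>C. (G r c)\<^sup>2) * (\<Sum>c\<in>C. (z c)\<^sup>2))"
        by ((rule sum_mono)+, rule Cauchy_Schwarz_ineq_sum)
      then show "sqrt (\<Sum>r\<in>R. (\<Sum>c\<in>C. G r c * z c)\<^sup>2) \<le> sqrt (\<Sum>r\<in>R. \<Sum>c\<in>C. (G r c)\<^sup>2)"
        using z1 by simp
    qed
    have "V / n \<le> smax_sub d G J M"
      unfolding smax_sub_def C_def[symmetric] R_def[symmetric]
      by (rule cSup_upper[OF mem bdd])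
    then show ?thesis using npos
      unfolding C_def[symmetric] R_def[symmetric] n_def[symmetric] V_def[symmetric]
      by (simp add: pos_divide_le_eq mult.commute)
  qed
qed

lemma mat_low:
  fixes X :: "nat \<Rightarrow> nat \<Rightarrow> real"
  assumes "finite J" "finite M" "finite K" "0 \<le> smin_sub d G J M"
  shows "smin_sub d G J M * L2_set (\<lambda>(c,k). X c k) (blk_idx d M \<times> K)
     \<le> L2_set (\<lambda>(r,k). \<Sum>c\<in>blk_idx d M. G r c * X c k) (blk_idx d J \<times> K)"
proof -
  have fJ: "finite (blk_idx d J)" and fM: "finite (blk_idx d M)" using assms by (simp_all add: blk_idx_finite)
  have "smin_sub d G J M * L2_set (\<lambda>(c,k). X c k) (blk_idx d M \<times> K)
      = L2_set (\<lambda>k. smin_sub d G J M * L2_set (\<lambda>c. X c k) (blk_idx d M)) K"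
    using assms(4) by (simp add: L2_set_prod[OF fM assms(3)] L2_set_right_distrib)
  also have "\<dots> \<le> L2_set (\<lambda>k. L2_set (\<lambda>r. \<Sum>c\<in>blk_idx d M. G r c * X c k) (blk_idx d J)) K"
  proof (rule L2_set_mono)
    fix k
    show "smin_sub d G J M * L2_set (\<lambda>c. X c k) (blk_idx d M) \<le> L2_set (\<lambda>r. \<Sum>c\<in>blk_idx d M. G r c * X c k) (blk_idx d J)"
      unfolding L2_set_def by (rule col_low)
    show "0 \<le> smin_sub d G J M * L2_set (\<lambda>c. X c k) (blk_idx d M)" using assms(4) by simp
  qed
  also have "\<dots> = L2_set (\<lambda>(r,k). \<Sum>c\<in>blk_idx d M. G r c * X c k) (blk_idx d J \<times> K)"
    by (simp add: L2_set_prod[OF fJ assms(3)])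
  finally show ?thesis .
qed

lemma mat_up:
  fixes X :: "nat \<Rightarrow> nat \<Rightarrow> real"
  assumes "finite J" "finite M" "finite K" "smax_sub d G J M \<le> \<sigma>" "0 \<le> \<sigma>"
  shows "L2_set (\<lambda>(r,k). \<Sum>c\<in>blk_idx d M. G r c * X c k) (blk_idx d J \<times> K)
     \<le> \<sigma> * L2_set (\<lambda>(c,k). X c k) (blk_idx d M \<times> K)"
proof -
  have fJ: "finite (blk_idx d J)" and fM: "finite (blk_idx d M)" using assms by (simp_all add: blk_idx_finite)
  have "L2_set (\<lambda>(r,k). \<Sum>c\<in>blk_idx d M. G r c * X c k) (blk_idx d J \<times> K)
     = L2_set (\<lambda>k. L2_set (\<lambda>r. \<Sum>c\<in>blk_idx d M. G r c * X c k) (blk_idx d J)) K"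
    by (simp add: L2_set_prod[OF fJ assms(3)])
  also have "\<dots> \<le> L2_set (\<lambda>k. \<sigma> * L2_set (\<lambda>c. X c k) (blk_idx d M)) K"
  proof (rule L2_set_mono)
    fix k
    have "L2_set (\<lambda>r. \<Sum>c\<in>blk_idx d M. G r c * X c k) (blk_idx d J)
        \<le> smax_sub d G J M * L2_set (\<lambda>c. X c k) (blk_idx d M)"
      unfolding L2_set_def by (rule col_up[OF assms(2)])
    also have "\<dots> \<le> \<sigma> * L2_set (\<lambda>c. X c k) (blk_idx d M)"
      using assms(4) by (intro mult_right_mono) auto
    finally show "L2_set (\<lambda>r. \<Sum>c\<in>blk_idx d M. G r c * X c k) (blk_idx d J)
        \<le> \<sigma> * L2_set (\<lambda>c. X c k) (blk_idx d M)" .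
    show "0 \<le> L2_set (\<lambda>r. \<Sum>c\<in>blk_idx d M. G r c * X c k) (blk_idx d J)" by simp
  qed
  also have "\<dots> = \<sigma> * L2_set (\<lambda>(c,k). X c k) (blk_idx d M \<times> K)"
    using assms(5) by (simp add: L2_set_prod[OF fM assms(3)] L2_set_right_distrib)
  finally show ?thesis .
qed



lemma sorted_desc_list:
  fixes f :: "'a::linorder \<Rightarrow> real"
  assumes "finite A"
  obtains xs where "distinct xs" "set xs = A" "\<And>i i'. i < i' \<Longrightarrow> i' < length xs \<Longrightarrow> f (xs!i') \<le> f (xs!i)"
proof -
  define xs where "xs = sort_key (\<lambda>j. - f j) (sorted_list_of_set A)"
  have "distinct xs" "set xs = A" using assms by (simp_all add: xs_def)
  moreover have "sorted (map (\<lambda>j. - f j) xs)" unfolding xs_def by (rule sorted_sort_key)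
  then have "sorted_wrt (\<lambda>x y. - f x \<le> - f y) xs" by (simp add: sorted_map)
  then have "\<And>i i'. i < i' \<Longrightarrow> i' < length xs \<Longrightarrow> f (xs!i') \<le> f (xs!i)"
    by (auto simp: sorted_wrt_iff_nth_less)
  ultimately show ?thesis using that by blast
qed

lemma chunk_decomp:
  fixes f :: "nat \<Rightarrow> real" and A :: "nat set" and k :: nat
  assumes finA: "finite A" and kpos: "k > 0" and fnn: "\<And>j. j \<in> A \<Longrightarrow> 0 \<le> f j"
  obtains Ch :: "nat \<Rightarrow> nat set" and N :: nat where
    "\<And>c. Ch c \<subseteq> A" "\<And>c. card (Ch c) \<le> k" "\<And>c c'. c \<noteq> c' \<Longrightarrow> Ch c \<inter> Ch c' = {}"
    "A = (\<Union>c<N. Ch c)"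
    "(\<Sum>c\<in>{1..<N}. L2_set f (Ch c)) \<le> (\<Sum>j\<in>A. f j) / sqrt k"
proof -
  obtain xs where xs: "distinct xs" "set xs = A" and srt: "\<And>i i'. i < i' \<Longrightarrow> i' < length xs \<Longrightarrow> f (xs!i') \<le> f (xs!i)"
    using sorted_desc_list[OF finA, of f] by blast
  define n where "n = length xs"
  define P where "P c = {i. i < n \<and> i div k = c}" for c
  define Ch where "Ch c = (\<lambda>i. xs!i) ` P c" for c
  define N where "N = n div k + 1"
  have injn: "inj_on (\<lambda>i. xs!i) {..<n}"
    using xs(1) unfolding n_def by (auto intro!: inj_onI simp: nth_eq_iff_index_eq)
  have Psub: "P c \<subseteq> {..<n}" for c unfolding P_def by auto
  have Pk: "P c \<subseteq> {c*k..<c*k+k}" for c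
  proof
    fix i assume "i \<in> P c"
    then have "i div k = c" unfolding P_def by simp
    have "i = c*k + i mod k" using \<open>i div k = c\<close> by (metis div_mult_mod_eq)
    moreover have "i mod k < k" using kpos by simp
    ultimately show "i \<in> {c*k..<c*k+k}" by (metis atLeastLessThan_iff le_add1 nat_add_left_cancel_less)
  qed
  have finP: "finite (P c)" for c using Psub[of c] finite_subset by blast
  have cardCh: "card (Ch c) = card (P c)" for c
    unfolding Ch_def by (rule card_image) (rule inj_on_subset[OF injn Psub])
  have c1: "Ch c \<subseteq> A" for c unfolding Ch_def P_def n_def using xs(2) by auto
  have c2: "card (Ch c) \<le> k" for c
  proof -
    have "card (P c) \<le> card {c*k..<c*k+k}" by (rule card_mono) (simp_all add: Pk)
    then show ?thesis by (simp add: cardCh)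
  qed
  have c3: "Ch c \<inter> Ch c' = {}" if "c \<noteq> c'" for c c'
  proof (rule ccontr)
    assume "Ch c \<inter> Ch c' \<noteq> {}"
    then obtain i i' where "i \<in> P c" "i' \<in> P c'" "xs!i = xs!i'" unfolding Ch_def by blast
    moreover from this have "i < n" "i' < n" unfolding P_def by auto
    ultimately have "i = i'" using xs(1) unfolding n_def by (simp add: nth_eq_iff_index_eq)
    then show False using \<open>i \<in> P c\<close> \<open>i' \<in> P c'\<close> that unfolding P_def by auto
  qed
  have c4: "A = (\<Union>c<N. Ch c)"
  proof
    show "(\<Union>c<N. Ch c) \<subseteq> A" using c1 by blast
    show "A \<subseteq> (\<Union>c<N. Ch c)"
    proof
      fix j assume "j \<in> A"
      then obtain i where i: "i < n" "j = xs!i" using xs(2) unfolding n_def by (metis in_set_conv_nth)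
      then have "i div k < N" unfolding N_def using div_le_mono[of i n k] by simp
      moreover have "j \<in> Ch (i div k)" unfolding Ch_def P_def using i by auto
      ultimately show "j \<in> (\<Union>c<N. Ch c)" by blast
    qed
  qed
  define S where "S c = (\<Sum>j\<in>Ch c. f j)" for c
  have Snn: "0 \<le> S c" for c unfolding S_def using c1 fnn by (intro sum_nonneg) blast
  have chunk: "L2_set f (Ch c) \<le> S (c - 1) / sqrt k" if "c \<ge> 1" for c
  proof (cases "P c = {}")
    case True
    then show ?thesis unfolding Ch_def using Snn by simp
  next
    case False
    then obtain i0 where i0: "i0 \<in> P c" by blast
    then have i0n: "i0 < n" and i0c: "i0 div k = c" unfolding P_def by auto
    have ck: "c * k \<le> i0" using subsetD[OF Pk[of c] i0] by simp
    have Pprev: "P (c-1) = {(c-1)*k..<(c-1)*k+k}"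
    proof
      show "P (c-1) \<subseteq> {(c-1)*k..<(c-1)*k+k}" by (rule Pk)
      show "{(c-1)*k..<(c-1)*k+k} \<subseteq> P (c-1)"
      proof
        fix i assume i: "i \<in> {(c-1)*k..<(c-1)*k+k}"
        have ceq: "(c-1)*k+k = c*k" using that by (cases c) auto
        have "i < n" using i ceq ck i0n by auto
        moreover have "i div k = c - 1"
          by (rule div_nat_eqI) (use i in \<open>auto simp: mult.commute\<close>)
        ultimately show "i \<in> P (c-1)" unfolding P_def by simp
      qed
    qed
    then have cardprev: "card (Ch (c-1)) = k" by (simp add: cardCh)
    have fle: "f j \<le> S (c-1) / k" if "j \<in> Ch c" for j
    proof -
      obtain i where i: "i \<in> P c" "j = xs!i" using \<open>j \<in> Ch c\<close> unfolding Ch_def by blast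
      have "i < n" "c*k \<le> i" using i(1) Pk unfolding P_def by auto
      have "f j \<le> f j'" if "j' \<in> Ch (c-1)" for j'
      proof -
        obtain i' where i': "i' \<in> P (c-1)" "j' = xs!i'" using \<open>j' \<in> Ch (c-1)\<close> unfolding Ch_def by blast
        have "i' < (c-1)*k+k" using i' Pprev by auto
        also have "(c-1)*k+k = c*k" using \<open>c \<ge> 1\<close> by (cases c) auto
        finally have "i' < i" using \<open>c*k \<le> i\<close> by simp
        then show ?thesis using srt[of i' i] \<open>i < n\<close> i i' unfolding n_def by simp
      qed
      then have "of_nat (card (Ch (c-1))) * f j \<le> S (c-1)"
        unfolding S_def by (intro sum_bounded_below) auto
      then show ?thesis using cardprev kpos by (simp add: field_simps)
    qed
    have "(L2_set f (Ch c))\<^sup>2 = (\<Sum>j\<in>Ch c. (f j)\<^sup>2)"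
      unfolding L2_set_def by (simp add: sum_nonneg)
    also have "\<dots> \<le> of_nat (card (Ch c)) * (S (c-1) / k)\<^sup>2"
    proof (rule sum_bounded_above)
      fix j assume "j \<in> Ch c"
      then show "(f j)\<^sup>2 \<le> (S (c-1) / k)\<^sup>2" using fle fnn c1 by (intro power_mono) blast+
    qed
    also have "\<dots> \<le> of_nat k * (S (c-1) / k)\<^sup>2" using c2 by (intro mult_right_mono) auto
    also have "\<dots> = (S (c-1) / sqrt k)\<^sup>2" using kpos by (simp add: power_divide power2_eq_square)
    finally show ?thesis
      by (rule power2_le_imp_le) (simp add: Snn)
  qed
  have "(\<Sum>c\<in>{1..<N}. L2_set f (Ch c)) \<le> (\<Sum>c\<in>{1..<N}. S (c - 1) / sqrt k)"
    using chunk by (intro sum_mono) auto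
  also have "\<dots> = (\<Sum>c\<in>{0..<N-1}. S c / sqrt k)"
    by (rule sum.reindex_bij_witness[of _ Suc "\<lambda>c. c - 1"]) auto
  also have "\<dots> \<le> (\<Sum>c\<in>{..<N}. S c / sqrt k)"
    by (rule sum_mono2) (auto simp: Snn)
  also have "\<dots> = (\<Sum>c<N. S c) / sqrt k" by (simp add: sum_divide_distrib)
  also have "(\<Sum>c<N. S c) = (\<Sum>j\<in>A. f j)"
  proof -
    have "(\<Sum>j\<in>(\<Union>c<N. Ch c). f j) = (\<Sum>c<N. \<Sum>j\<in>Ch c. f j)"
    proof (rule sum.UNION_disjoint)
      show "\<forall>c\<in>{..<N}. finite (Ch c)" using finP unfolding Ch_def by blast
      show "\<forall>c\<in>{..<N}. \<forall>c'\<in>{..<N}. c \<noteq> c' \<longrightarrow> Ch c \<inter> Ch c' = {}" using c3 by blast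
    qed simp
    then show ?thesis unfolding S_def using c4 by simp
  qed
  finally show ?thesis using that[OF c1 c2 c3 c4] by blast
qed



lemma blocks_L2:
  fixes X :: "nat \<Rightarrow> nat \<Rightarrow> real"
  assumes "finite M"
  shows "L2_set (\<lambda>(c,k). X c k) (blk_idx d M \<times> {..<dt}) = L2_set (\<lambda>j. block_fro d dt X j 0) M"
proof -
  have "(\<Sum>x\<in>blk_idx d M \<times> {..<dt}. (case x of (c,k) \<Rightarrow> X c k)\<^sup>2)
      = (\<Sum>c\<in>blk_idx d M. \<Sum>k<dt. (X c k)\<^sup>2)"
    by (simp add: sum.cartesian_product split_def)
  also have "\<dots> = (\<Sum>j\<in>M. \<Sum>e<d. \<Sum>k<dt. (X (j*d+e) k)\<^sup>2)"
    by (rule sum_blk_idx[OF assms])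
  also have "\<dots> = (\<Sum>j\<in>M. (block_fro d dt X j 0)\<^sup>2)"
    unfolding block_fro_def by (simp add: sum_nonneg)
  finally show ?thesis unfolding L2_set_def by simp
qed

lemma L2_set_diff_le: "L2_set (\<lambda>x. a x - b x) A \<le> L2_set a A + L2_set b A"
proof -
  have "L2_set (\<lambda>x. a x + (- b x)) A \<le> L2_set a A + L2_set (\<lambda>x. - b x) A"
    by (rule L2_set_triangle_ineq)
  moreover have "L2_set (\<lambda>x. - b x) A = L2_set b A" unfolding L2_set_def by simp
  ultimately show ?thesis by simp
qed

lemma L2_subset: "finite B \<Longrightarrow> A \<subseteq> B \<Longrightarrow> L2_set f A \<le> L2_set f B"
  unfolding L2_set_def by (intro real_sqrt_le_mono sum_mono2) auto

lemma sum_le_sqrt_card_L2: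
  fixes f :: "'a \<Rightarrow> real"
  shows "(\<Sum>j\<in>A. f j) \<le> sqrt (card A) * L2_set f A"
proof -
  have "(\<Sum>j\<in>A. f j)\<^sup>2 \<le> (\<Sum>j\<in>A. (f j)\<^sup>2) * card A" by (rule sum_squared_le_sum_of_squares)
  then have "\<bar>\<Sum>j\<in>A. f j\<bar> \<le> sqrt ((\<Sum>j\<in>A. (f j)\<^sup>2) * card A)"
    using real_le_rsqrt by (metis real_sqrt_abs real_sqrt_le_mono)
  then show ?thesis unfolding L2_set_def by (simp add: real_sqrt_mult mult.commute)
qed

lemma block_fro_4:
  "block_fro m1 m2 (\<lambda>r c. A r c - B r c - C r c + D r c) i j
    \<le> block_fro m1 m2 A i j + block_fro m1 m2 B i j + block_fro m1 m2 C i j + block_fro m1 m2 D i j"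
proof -
  have "block_fro m1 m2 (\<lambda>r c. (A r c + - B r c) + - C r c + D r c) i j
      \<le> block_fro m1 m2 (\<lambda>r c. (A r c + - B r c) + - C r c) i j + block_fro m1 m2 D i j"
    by (rule block_fro_add)
  also have "block_fro m1 m2 (\<lambda>r c. (A r c + - B r c) + - C r c) i j
      \<le> block_fro m1 m2 (\<lambda>r c. A r c + - B r c) i j + block_fro m1 m2 (\<lambda>r c. - C r c) i j"
    by (rule block_fro_add)
  also have "block_fro m1 m2 (\<lambda>r c. A r c + - B r c) i j
      \<le> block_fro m1 m2 A i j + block_fro m1 m2 (\<lambda>r c. - B r c) i j"
    by (rule block_fro_add)
  finally show ?thesis by (simp add: block_fro_uminus)
qed

lemma Min_Max_empty: "Min ({} :: real set) = Max {}"
  by (simp add: Min.eq_fold' Max.eq_fold')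



lemma prob_Int_ge:
  assumes "prob_space M" "A \<in> sets M" "B \<in> sets M"
  shows "measure M (A \<inter> B) \<ge> measure M A + measure M B - 1"
proof -
  interpret prob_space M by fact
  have "measure M (A \<union> B) = measure M A + measure M B - measure M (A \<inter> B)"
    by (rule measure_Un3) (use assms in \<open>auto simp: fmeasurable_eq_sets\<close>)
  moreover have "measure M (A \<union> B) \<le> 1" by (rule prob_le_1)
  ultimately show ?thesis by simp
qed

lemma smin_le_smax:
  assumes "finite M" "M \<noteq> {}" "d \<ge> 1"
  shows "smin_sub d G J M \<le> smax_sub d G J M"
proof -
  obtain j0 where "j0 \<in> M" using assms(2) by blast
  define c0 where "c0 = j0 * d + 0"
  have c0: "c0 \<in> blk_idx d M" unfolding blk_idx_def c0_def using \<open>j0 \<in> M\<close> assms(3)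
    by (intro image_eqI[where x="(j0, 0)"]) auto
  have fin: "finite (blk_idx d M)" using assms(1) by (rule blk_idx_finite)
  define x :: "nat \<Rightarrow> real" where "x c = (if c = c0 then 1 else 0)" for c
  have "(\<Sum>c\<in>blk_idx d M. (x c)\<^sup>2) = (\<Sum>c\<in>blk_idx d M. if c = c0 then 1 else 0)"
    by (rule sum.cong) (auto simp: x_def)
  also have "\<dots> = 1" using fin c0 by simp
  finally have x1: "(\<Sum>c\<in>blk_idx d M. (x c)\<^sup>2) = 1" .
  have "smin_sub d G J M * sqrt (\<Sum>c\<in>blk_idx d M. (x c)\<^sup>2)
     \<le> sqrt (\<Sum>r\<in>blk_idx d J. (\<Sum>c\<in>blk_idx d M. G r c * x c)\<^sup>2)" by (rule col_low)
  also have "\<dots> \<le> smax_sub d G J M * sqrt (\<Sum>c\<in>blk_idx d M. (x c)\<^sup>2)" by (rule col_up[OF assms(1)])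
  finally show ?thesis using x1 by simp
qed



lemma main_det:
  fixes \<theta>0 \<theta>h G g0 R Gh gh0 :: "nat \<Rightarrow> nat \<Rightarrow> real"
  assumes p1: "p \<ge> 1" and d1: "d \<ge> 1" and c5: "c5 > 0"
  and sdef: "s = card {j. j < p \<and> block_fro d dt \<theta>0 j 0 \<noteq> 0}"
  and eq0: "\<forall>i < q * d. \<forall>k < dt. gfun G g0 (p * d) \<theta>0 i k + R i k = 0"
  and e1: "\<epsilon>1 > 0" and e2: "\<epsilon>2 > 0" and g0: "\<gamma> \<ge> 0"
  and B1a: "bmax d d q p (mdiff Gh G) \<le> \<epsilon>1" and B1b: "bmax d dt q 1 (mdiff gh0 g0) \<le> \<epsilon>1"
  and B2: "bmax d dt q 1 R \<le> \<epsilon>2"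
  and B3: "bmax d dt q 1 (gfun Gh gh0 (p * d) \<theta>0) \<le> \<gamma>"
  and mu: "\<mu> > 0"
  and B4a: "sigma_max_m d p q (16 * real s / \<mu>\<^sup>2) G \<ge> c5"
  and B4b: "sigma_min_m d p q (16 * real s / \<mu>\<^sup>2) G / sigma_max_m d p q (16 * real s / \<mu>\<^sup>2) G \<ge> \<mu>"
  and Kb: "bnorm1 d dt p \<theta>0 \<le> K"
  and rmd: "is_block_rmd p q d dt Gh gh0 \<gamma> \<theta>h"
  shows "bnorm1 d dt p (mdiff \<theta>h \<theta>0) \<le> 16 / c5 * real s / \<mu>\<^sup>2 * (\<gamma> + (K + 1) * \<epsilon>1 + \<epsilon>2)"
proof -
  define \<Delta> where "\<Delta> = mdiff \<theta>h \<theta>0"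
  define f where "f j = block_fro d dt \<Delta> j 0" for j
  define t where "t j = block_fro d dt \<theta>0 j 0" for j
  define h where "h j = block_fro d dt \<theta>h j 0" for j
  define S where "S = {j. j < p \<and> t j \<noteq> 0}"
  define Sc where "Sc = {..<p} - S"
  have finS: "finite S" unfolding S_def by simp
  have finSc: "finite Sc" unfolding Sc_def by simp
  have sS: "s = card S" unfolding sdef S_def t_def ..
  have fnn: "0 \<le> f j" for j unfolding f_def by (rule block_fro_nonneg)
  have hnn: "0 \<le> h j" for j unfolding h_def by (rule block_fro_nonneg)
  have feas: "bmax d dt q 1 (gfun Gh gh0 (p*d) \<theta>h) \<le> \<gamma>"
    and hle: "bnorm1 d dt p \<theta>h \<le> bnorm1 d dt p \<theta>0"
    using rmd B3 unfolding is_block_rmd_def by auto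
  have K0: "K \<ge> 0" using Kb unfolding bnorm1_def by (metis block_fro_nonneg sum_nonneg order_trans)
  have tS0: "t j = 0" if "j \<in> Sc" for j using that unfolding Sc_def S_def by auto
  have fh: "f j \<le> h j" if "j \<in> Sc" for j
  proof -
    have "block_fro d dt (mdiff \<theta>h \<theta>0) j 0 \<le> block_fro d dt \<theta>h j 0 + block_fro d dt \<theta>0 j 0"
      by (rule block_fro_mdiff_le)
    then show ?thesis using tS0[OF that] unfolding f_def h_def t_def \<Delta>_def by simp
  qed
  have symm: "block_fro d dt (mdiff \<theta>0 \<theta>h) j 0 = f j" for j
  proof -
    have "mdiff \<theta>0 \<theta>h = (\<lambda>r c. - \<Delta> r c)" unfolding \<Delta>_def mdiff_def by (auto simp: fun_eq_iff)
    then show ?thesis unfolding f_def by (simp add: block_fro_uminus)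
  qed
  have th: "t j - f j \<le> h j" for j
  proof -
    have "block_fro d dt \<theta>0 j 0 \<le> block_fro d dt (mdiff \<theta>0 \<theta>h) j 0 + block_fro d dt \<theta>h j 0"
      by (rule block_fro_le_mdiff)
    then show ?thesis using symm[of j] unfolding t_def h_def by simp
  qed
  have split_p: "{..<p} = S \<union> Sc" "S \<inter> Sc = {}" unfolding Sc_def S_def by auto
  have sum_split: "(\<Sum>j<p. g j) = (\<Sum>j\<in>S. g j) + (\<Sum>j\<in>Sc. g j)" for g :: "nat \<Rightarrow> real"
    using split_p finS finSc by (simp add: sum.union_disjoint)
  have "(\<Sum>j\<in>Sc. f j) + (\<Sum>j\<in>S. t j - f j) \<le> (\<Sum>j\<in>Sc. h j) + (\<Sum>j\<in>S. h j)"
    by (intro add_mono sum_mono) (simp_all add: fh th)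
  also have "\<dots> = bnorm1 d dt p \<theta>h" unfolding bnorm1_def h_def[symmetric] using sum_split[of h] by simp
  also have "\<dots> \<le> bnorm1 d dt p \<theta>0" by (rule hle)
  also have "\<dots> = (\<Sum>j\<in>S. t j)" unfolding bnorm1_def t_def[symmetric] using sum_split[of t] tS0 by simp
  finally have cone: "(\<Sum>j\<in>Sc. f j) \<le> (\<Sum>j\<in>S. f j)" by (simp add: sum_subtractf)
  have l1: "bnorm1 d dt p \<Delta> \<le> 2 * (\<Sum>j\<in>S. f j)"
    unfolding bnorm1_def f_def[symmetric] using sum_split[of f] cone by simp
  show ?thesis
  proof (cases "s = 0")
    case True
    then have "S = {}" using sS finS by simp
    then show ?thesis using l1 True unfolding \<Delta>_def by simp
  next
    case False
    then have s1: "s \<ge> 1" by simp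
    define lam where "lam = \<gamma> + K * \<epsilon>1 + \<epsilon>1 + \<epsilon>2"
    have lam0: "lam \<ge> 0" unfolding lam_def using g0 K0 e1 e2 by simp
    define D where "D r k = (\<Sum>c<p*d. G r c * \<Delta> c k)" for r k
    have hK: "bnorm1 d dt p \<theta>h \<le> K" using hle Kb by simp
    have Dblk: "block_fro d dt D i 0 \<le> lam" if iq: "i < q" for i
    proof -
      define E1 where "E1 r k = (\<Sum>c<p*d. mdiff Gh G r c * \<theta>h c k)" for r k
      have eqD: "D (i*d+a) (0*dt+b) = (\<lambda>r k. gfun Gh gh0 (p*d) \<theta>h r k - E1 r k - mdiff gh0 g0 r k + R r k) (i*d+a) (0*dt+b)"
        if ab: "a < d" "b < dt" for a b
      proof -
        have "i*d+a < i*d + d" using ab by simp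
        also have "\<dots> = (i+1)*d" by simp
        also have "\<dots> \<le> q*d" using iq by (intro mult_right_mono) auto
        finally have "i*d+a < q*d" .
        then have r0: "gfun G g0 (p*d) \<theta>0 (i*d+a) b = - R (i*d+a) b" using eq0 ab by fastforce
        define r where "r = i*d+a"
        have A1: "(\<Sum>c<p*d. G r c * (\<theta>h c b - \<theta>0 c b)) = (\<Sum>c<p*d. G r c * \<theta>h c b) - (\<Sum>c<p*d. G r c * \<theta>0 c b)"
          by (simp add: right_diff_distrib sum_subtractf)
        have A2: "(\<Sum>c<p*d. (Gh r c - G r c) * \<theta>h c b) = (\<Sum>c<p*d. Gh r c * \<theta>h c b) - (\<Sum>c<p*d. G r c * \<theta>h c b)"
          by (simp add: left_diff_distrib sum_subtractf)
        show ?thesis using r0 A1 A2 unfolding r_def[symmetric] D_def E1_def gfun_def mdiff_def \<Delta>_def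
          by simp
      qed
      have "block_fro d dt D i 0 = block_fro d dt (\<lambda>r k. gfun Gh gh0 (p*d) \<theta>h r k - E1 r k - mdiff gh0 g0 r k + R r k) i 0"
        by (rule block_fro_cong) (rule eqD)
      also have "\<dots> \<le> block_fro d dt (gfun Gh gh0 (p*d) \<theta>h) i 0 + block_fro d dt E1 i 0
           + block_fro d dt (mdiff gh0 g0) i 0 + block_fro d dt R i 0"
        by (rule block_fro_4)
      also have "\<dots> \<le> \<gamma> + K * \<epsilon>1 + \<epsilon>1 + \<epsilon>2"
      proof (intro add_mono)
        show "block_fro d dt (gfun Gh gh0 (p*d) \<theta>h) i 0 \<le> \<gamma>"
          using le_bmax[of i q 0 1 d dt "gfun Gh gh0 (p*d) \<theta>h"] iq feas by simp
        show "block_fro d dt (mdiff gh0 g0) i 0 \<le> \<epsilon>1"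
          using le_bmax[of i q 0 1 d dt "mdiff gh0 g0"] iq B1b by simp
        show "block_fro d dt R i 0 \<le> \<epsilon>2"
          using le_bmax[of i q 0 1 d dt R] iq B2 by simp
        have "block_fro d dt E1 i 0 \<le> (\<Sum>j<p. block_fro d d (mdiff Gh G) i j * block_fro d dt \<theta>h j 0)"
          unfolding E1_def by (rule block_prod_bound)
        also have "\<dots> \<le> (\<Sum>j<p. \<epsilon>1 * h j)"
        proof (rule sum_mono)
          fix j assume "j \<in> {..<p}"
          then have "block_fro d d (mdiff Gh G) i j \<le> \<epsilon>1"
            using le_bmax[of i q j p d d "mdiff Gh G"] iq B1a by simp
          then show "block_fro d d (mdiff Gh G) i j * block_fro d dt \<theta>h j 0 \<le> \<epsilon>1 * h j"
            unfolding h_def by (intro mult_right_mono) (simp_all add: block_fro_nonneg)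
        qed
        also have "\<dots> = \<epsilon>1 * bnorm1 d dt p \<theta>h" unfolding bnorm1_def h_def by (simp add: sum_distrib_left)
        also have "\<dots> \<le> \<epsilon>1 * K" using hK e1 by (intro mult_left_mono) auto
        finally show "block_fro d dt E1 i 0 \<le> K * \<epsilon>1" by (simp add: mult.commute)
      qed
      finally show ?thesis unfolding lam_def .
    qed
    define m where "m = 16 * real s / \<mu>\<^sup>2"
    define u where "u = real s / \<mu>\<^sup>2"
    have m_u: "m = 16 * u" unfolding m_def u_def by simp
    define Mset where "Mset = {M. M \<subseteq> {..<p} \<and> M \<noteq> {} \<and> real (card M) \<le> m}"
    define Jset where "Jset = {J. J \<subseteq> {..<q} \<and> real (card J) \<le> m}"
    define \<sigma>M where "\<sigma>M = sigma_max_m d p q m G"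
    define \<sigma>m where "\<sigma>m = sigma_min_m d p q m G"
    have \<sigma>M': "\<sigma>M = Max ((\<lambda>M. Max ((\<lambda>J. smax_sub d G J M) ` Jset)) ` Mset)"
      unfolding \<sigma>M_def sigma_max_m_def Mset_def Jset_def ..
    have \<sigma>m': "\<sigma>m = Min ((\<lambda>M. Max ((\<lambda>J. smin_sub d G J M) ` Jset)) ` Mset)"
      unfolding \<sigma>m_def sigma_min_m_def Mset_def Jset_def ..
    have finM: "finite Mset" by (rule finite_subset[of _ "Pow {..<p}"]) (auto simp: Mset_def)
    have finJ: "finite Jset" by (rule finite_subset[of _ "Pow {..<q}"]) (auto simp: Jset_def)
    have m0: "m \<ge> 0" unfolding m_def by simp
    have Jne: "{} \<in> Jset" unfolding Jset_def using m0 by simp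
    have \<sigma>Mc5: "\<sigma>M \<ge> c5" using B4a unfolding \<sigma>M_def m_def .
    have \<sigma>Mpos: "\<sigma>M > 0" using \<sigma>Mc5 c5 by simp
    have ratio: "\<sigma>m / \<sigma>M \<ge> \<mu>" using B4b unfolding \<sigma>M_def \<sigma>m_def m_def .
    have \<sigma>m_ge: "\<sigma>m \<ge> \<mu> * \<sigma>M" using ratio \<sigma>Mpos by (simp add: pos_le_divide_eq)
    have mu1: "\<mu> \<le> 1"
    proof (cases "Mset = {}")
      case True
      then have "\<sigma>m = \<sigma>M" unfolding \<sigma>m' \<sigma>M' using Min_Max_empty by simp
      then show ?thesis using ratio \<sigma>Mpos by simp
    next
      case False
      then obtain M0 where M0: "M0 \<in> Mset" by blast
      have "\<sigma>m \<le> Max ((\<lambda>J. smin_sub d G J M0) ` Jset)"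
        unfolding \<sigma>m' by (rule Min_le) (use finM M0 in auto)
      moreover obtain J1 where J1: "J1 \<in> Jset" "Max ((\<lambda>J. smin_sub d G J M0) ` Jset) = smin_sub d G J1 M0"
      proof -
      have "Max ((\<lambda>J. smin_sub d G J M0) ` Jset) \<in> (\<lambda>J. smin_sub d G J M0) ` Jset"
        by (rule Max_in) (use finJ Jne in auto)
      then show ?thesis using that by (metis (no_types, lifting) imageE)
    qed
      moreover have "smin_sub d G J1 M0 \<le> smax_sub d G J1 M0"
        by (rule smin_le_smax) (use M0 d1 in \<open>auto simp: Mset_def intro: finite_subset\<close>)
      moreover have "smax_sub d G J1 M0 \<le> Max ((\<lambda>J. smax_sub d G J M0) ` Jset)"
        by (rule Max_ge) (use finJ J1 in auto)
      moreover have "Max ((\<lambda>J. smax_sub d G J M0) ` Jset) \<le> \<sigma>M"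
        unfolding \<sigma>M' by (rule Max_ge) (use finM M0 in auto)
      ultimately have "\<sigma>m \<le> \<sigma>M" by linarith
      then have "\<sigma>m / \<sigma>M \<le> 1" using \<sigma>Mpos by simp
      then show ?thesis using ratio by linarith
    qed
    have mu2: "\<mu>\<^sup>2 \<le> 1" using mu1 mu by (simp add: power_le_one)
    have us: "u \<ge> real s" unfolding u_def using mu2 mu s1
      by (simp add: le_divide_eq)
    have u1: "u \<ge> 1" using us s1 by simp
    define k where "k = nat \<lceil>4 * u\<rceil>"
    have kge: "real k \<ge> 4 * u" unfolding k_def by linarith
    have kle: "real k \<le> 4 * u + 1" unfolding k_def using u1 by linarith
    have kpos: "k > 0" using kge u1 by simp
    have km: "real k \<le> m" using kle u1 m_u by simp
    have fnnSc: "\<And>j. j \<in> Sc \<Longrightarrow> 0 \<le> f j" using fnn by simp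
    obtain Ch :: "nat \<Rightarrow> nat set" and N :: nat where Ch1: "\<And>c. Ch c \<subseteq> Sc" and Ch2: "\<And>c. card (Ch c) \<le> k"
      and Ch3: "\<And>c c'. c \<noteq> c' \<Longrightarrow> Ch c \<inter> Ch c' = {}" and Ch4: "Sc = (\<Union>c<N. Ch c)"
      and Ch5: "(\<Sum>c\<in>{1..<N}. L2_set f (Ch c)) \<le> (\<Sum>j\<in>Sc. f j) / sqrt k"
    proof (rule chunk_decomp[where f=f and A=Sc and k=k, OF finSc kpos])
      fix j assume "j \<in> Sc" then show "0 \<le> f j" using fnn by simp
    next
      fix Ch :: "nat \<Rightarrow> nat set" and N :: nat assume a: "\<And>c. Ch c \<subseteq> Sc" "\<And>c. card (Ch c) \<le> k"
        "\<And>c c'. c \<noteq> c' \<Longrightarrow> Ch c \<inter> Ch c' = {}" "Sc = (\<Union>c<N. Ch c)"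
        "(\<Sum>c\<in>{1..<N}. L2_set f (Ch c)) \<le> (\<Sum>j\<in>Sc. f j) / sqrt k"
      show thesis by (rule that[of Ch N, OF a])
    qed
    define T0 where "T0 = S \<union> Ch 0"
    have T0sub: "T0 \<subseteq> {..<p}" unfolding T0_def using Ch1[of 0] split_p by blast
    have finT0: "finite T0" using T0sub finite_subset by blast
    have Sne: "S \<noteq> {}" using s1 sS by auto
    have T0ne: "T0 \<noteq> {}" unfolding T0_def using Sne by simp
    have "card T0 \<le> card S + card (Ch 0)" unfolding T0_def by (rule card_Un_le)
    then have "real (card T0) \<le> real s + real k" using Ch2[of 0] sS by linarith
    also have "\<dots> \<le> m" using kle us u1 m_u by linarith
    finally have cardT0: "real (card T0) \<le> m" .
    have T0M: "T0 \<in> Mset" unfolding Mset_def using T0sub T0ne cardT0 by simp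
    have "\<sigma>m \<le> Max ((\<lambda>J. smin_sub d G J T0) ` Jset)"
      unfolding \<sigma>m' by (rule Min_le) (use finM T0M in auto)
    moreover obtain J0 where J0: "J0 \<in> Jset" "Max ((\<lambda>J. smin_sub d G J T0) ` Jset) = smin_sub d G J0 T0"
    proof -
      have "Max ((\<lambda>J. smin_sub d G J T0) ` Jset) \<in> (\<lambda>J. smin_sub d G J T0) ` Jset"
        by (rule Max_in) (use finJ Jne in auto)
      then show ?thesis using that by (metis (no_types, lifting) imageE)
    qed
    ultimately have smin0: "smin_sub d G J0 T0 \<ge> \<mu> * \<sigma>M" using \<sigma>m_ge by linarith
    have smaxCh: "smax_sub d G J0 (Ch c) \<le> \<sigma>M" if "Ch c \<noteq> {}" for c
    proof -
      have "Ch c \<in> Mset" unfolding Mset_def using Ch1[of c] Ch2[of c] km that split_p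
        by auto
      have "smax_sub d G J0 (Ch c) \<le> Max ((\<lambda>J. smax_sub d G J (Ch c)) ` Jset)"
        by (rule Max_ge) (use finJ J0 in auto)
      also have "\<dots> \<le> \<sigma>M"
        unfolding \<sigma>M' by (rule Max_ge) (use finM \<open>Ch c \<in> Mset\<close> in auto)
      finally show ?thesis .
    qed
    have f_eq: "f = (\<lambda>j. block_fro d dt \<Delta> j 0)" by (rule ext) (simp add: f_def)
    have finJ0: "finite J0" using J0(1) unfolding Jset_def by (auto intro: finite_subset)
    have J0q: "J0 \<subseteq> {..<q}" and cardJ0: "real (card J0) \<le> m" using J0(1) unfolding Jset_def by auto
    define NJ where "NJ F = L2_set (\<lambda>(r,k). F r k) (blk_idx d J0 \<times> {..<dt})" for F :: "nat \<Rightarrow> nat \<Rightarrow> real"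
    define Y where "Y M r k = (\<Sum>c\<in>blk_idx d M. G r c * \<Delta> c k)" for M r k
    define X where "X = L2_set f T0"
    have X0: "X \<ge> 0" unfolding X_def by simp
    have NXblk: "L2_set (\<lambda>(c,k). \<Delta> c k) (blk_idx d M \<times> {..<dt}) = L2_set f M" if "finite M" for M
      using blocks_L2[OF that] f_eq by simp
    have smin_nn: "0 \<le> smin_sub d G J0 T0" using smin0 mu \<sigma>Mpos
      by (meson less_eq_real_def mult_pos_pos order_trans)
    have low: "smin_sub d G J0 T0 * X \<le> NJ (Y T0)"
    proof -
      have "smin_sub d G J0 T0 * L2_set (\<lambda>(c,k). \<Delta> c k) (blk_idx d T0 \<times> {..<dt})
         \<le> L2_set (\<lambda>(r,k). \<Sum>c\<in>blk_idx d T0. G r c * \<Delta> c k) (blk_idx d J0 \<times> {..<dt})"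
        by (rule mat_low[OF finJ0 finT0 finite_lessThan smin_nn])
      then show ?thesis unfolding NJ_def Y_def X_def NXblk[OF finT0] .
    qed
    have finCh: "finite (Ch c)" for c using Ch1[of c] finSc finite_subset by blast
    have upCh: "NJ (Y (Ch c)) \<le> \<sigma>M * L2_set f (Ch c)" for c
    proof (cases "Ch c = {}")
      case True
      then show ?thesis unfolding NJ_def Y_def by (simp add: blk_idx_def L2_set_def)
    next
      case False
      have "NJ (Y (Ch c)) \<le> \<sigma>M * L2_set (\<lambda>(c,k). \<Delta> c k) (blk_idx d (Ch c) \<times> {..<dt})"
        unfolding NJ_def Y_def
        by (rule mat_up[OF finJ0 finCh finite_lessThan smaxCh[OF False]]) (use \<sigma>Mpos in simp)
      then show ?thesis using NXblk[OF finCh] by simp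
    qed
    have setsplit: "{..<p} = T0 \<union> (\<Union>c\<in>{1..<N}. Ch c)"
    proof -
      have "Sc = Ch 0 \<union> (\<Union>c\<in>{1..<N}. Ch c)"
      proof
        show "Sc \<subseteq> Ch 0 \<union> (\<Union>c\<in>{1..<N}. Ch c)"
        proof
          fix x assume "x \<in> Sc"
          then obtain c where "c < N" "x \<in> Ch c" using Ch4 by blast
          then show "x \<in> Ch 0 \<union> (\<Union>c\<in>{1..<N}. Ch c)" by (cases "c = 0") auto
        qed
        show "Ch 0 \<union> (\<Union>c\<in>{1..<N}. Ch c) \<subseteq> Sc" using Ch1 by blast
      qed
      then show ?thesis unfolding T0_def using split_p(1) by blast
    qed
    have disj: "T0 \<inter> (\<Union>c\<in>{1..<N}. Ch c) = {}"
    proof -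
      have "S \<inter> Ch c = {}" for c using Ch1[of c] split_p(2) by blast
      moreover have "Ch 0 \<inter> Ch c = {}" if "c \<in> {1..<N}" for c using Ch3[of 0 c] that by auto
      ultimately show ?thesis unfolding T0_def by blast
    qed
    have decomp: "Y T0 r k = D r k - (\<Sum>c\<in>{1..<N}. Y (Ch c) r k)" for r k
    proof -
      define w where "w j = (\<Sum>e<d. G r (j*d+e) * \<Delta> (j*d+e) k)" for j
      have Yw: "Y M r k = (\<Sum>j\<in>M. w j)" if "finite M" for M
        unfolding Y_def w_def by (rule sum_blk_idx[OF that])
      have "D r k = (\<Sum>j<p. w j)" unfolding D_def w_def by (simp add: sum_lessThan_blocks)
      also have "\<dots> = (\<Sum>j\<in>T0. w j) + (\<Sum>j\<in>(\<Union>c\<in>{1..<N}. Ch c). w j)"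
        unfolding setsplit by (rule sum.union_disjoint) (use finT0 finCh disj in auto)
      also have "(\<Sum>j\<in>(\<Union>c\<in>{1..<N}. Ch c). w j) = (\<Sum>c\<in>{1..<N}. \<Sum>j\<in>Ch c. w j)"
        by (rule sum.UNION_disjoint) (use finCh Ch3 in auto)
      finally show ?thesis using Yw[OF finT0] Yw[OF finCh] by simp
    qed
    have tri: "NJ (Y T0) \<le> NJ D + (\<Sum>c\<in>{1..<N}. NJ (Y (Ch c)))"
    proof -
      define A where "A = blk_idx d J0 \<times> {..<dt}"
      have "NJ (Y T0) = L2_set (\<lambda>x. (\<lambda>(r,k). D r k) x - (\<Sum>c\<in>{1..<N}. (\<lambda>(r,k). Y (Ch c) r k) x)) A"
        unfolding NJ_def A_def by (intro L2_set_cong) (auto simp: decomp split: prod.splits)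
      also have "\<dots> \<le> L2_set (\<lambda>(r,k). D r k) A + L2_set (\<lambda>x. \<Sum>c\<in>{1..<N}. (\<lambda>(r,k). Y (Ch c) r k) x) A"
        by (rule L2_set_diff_le)
      also have "L2_set (\<lambda>x. \<Sum>c\<in>{1..<N}. (\<lambda>(r,k). Y (Ch c) r k) x) A
          \<le> (\<Sum>c\<in>{1..<N}. L2_set (\<lambda>(r,k). Y (Ch c) r k) A)"
        by (rule L2_set_sum_le)
      finally show ?thesis unfolding NJ_def A_def by simp
    qed
    have ND: "NJ D \<le> sqrt m * lam"
    proof -
      have "NJ D = L2_set (\<lambda>i. block_fro d dt D i 0) J0" unfolding NJ_def by (rule blocks_L2[OF finJ0])
      also have "\<dots> \<le> L2_set (\<lambda>i. lam) J0"
        by (rule L2_set_mono) (use Dblk J0q in \<open>auto simp: block_fro_nonneg\<close>)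
      also have "\<dots> = sqrt (card J0) * lam" using lam0 by (simp add: L2_set_constant)
      also have "\<dots> \<le> sqrt m * lam" using cardJ0 lam0 by (intro mult_right_mono real_sqrt_le_mono) auto
      finally show ?thesis .
    qed
    have Lsum: "(\<Sum>c\<in>{1..<N}. NJ (Y (Ch c))) \<le> \<sigma>M * ((\<Sum>j\<in>Sc. f j) / sqrt k)"
    proof -
      have "(\<Sum>c\<in>{1..<N}. NJ (Y (Ch c))) \<le> (\<Sum>c\<in>{1..<N}. \<sigma>M * L2_set f (Ch c))"
        by (rule sum_mono) (rule upCh)
      also have "\<dots> = \<sigma>M * (\<Sum>c\<in>{1..<N}. L2_set f (Ch c))" by (simp add: sum_distrib_left)
      also have "\<dots> \<le> \<sigma>M * ((\<Sum>j\<in>Sc. f j) / sqrt k)" using Ch5 \<sigma>Mpos by (intro mult_left_mono) auto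
      finally show ?thesis .
    qed
    have LS: "L2_set f S \<le> X" unfolding X_def by (rule L2_subset[OF finT0]) (simp add: T0_def)
    have SX: "(\<Sum>j\<in>S. f j) \<le> sqrt s * X"
    proof -
      have "(\<Sum>j\<in>S. f j) \<le> sqrt (card S) * L2_set f S" by (rule sum_le_sqrt_card_L2)
      also have "\<dots> \<le> sqrt (card S) * X" using LS by (intro mult_left_mono) auto
      finally show ?thesis using sS by simp
    qed
    have skmu: "sqrt s / sqrt k \<le> \<mu> / 2"
    proof -
      have mu2pos: "\<mu>\<^sup>2 > 0" using mu by simp
      have "4 * real s \<le> real k * \<mu>\<^sup>2" using kge mu2pos unfolding u_def by (simp add: divide_le_eq)
      then have "real s / real k \<le> (\<mu> / 2)\<^sup>2" using kpos by (simp add: divide_le_eq power_divide mult.commute)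
      then have "sqrt (real s / real k) \<le> sqrt ((\<mu> / 2)\<^sup>2)" by (rule real_sqrt_le_mono)
      then show ?thesis using mu by (simp add: real_sqrt_divide)
    qed
    have scb: "(\<Sum>j\<in>Sc. f j) / sqrt k \<le> (\<mu>/2) * X"
    proof -
      have "(\<Sum>j\<in>Sc. f j) / sqrt k \<le> (sqrt s * X) / sqrt k" using cone SX by (intro divide_right_mono) auto
      also have "\<dots> = (sqrt s / sqrt k) * X" by simp
      also have "\<dots> \<le> (\<mu>/2) * X" using skmu X0 by (intro mult_right_mono) auto
      finally show ?thesis .
    qed
    have step1: "\<mu> * \<sigma>M * X \<le> sqrt m * lam + \<sigma>M * ((\<mu>/2) * X)"
    proof -
      have "\<mu> * \<sigma>M * X \<le> smin_sub d G J0 T0 * X" using smin0 X0 by (intro mult_right_mono) auto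
      also have "\<dots> \<le> NJ (Y T0)" by (rule low)
      also have "\<dots> \<le> NJ D + (\<Sum>c\<in>{1..<N}. NJ (Y (Ch c)))" by (rule tri)
      also have "\<dots> \<le> sqrt m * lam + \<sigma>M * ((\<Sum>j\<in>Sc. f j) / sqrt k)" using ND Lsum by simp
      also have "\<dots> \<le> sqrt m * lam + \<sigma>M * ((\<mu>/2) * X)"
        using mult_left_mono[OF scb, of \<sigma>M] \<sigma>Mpos by linarith
      finally show ?thesis .
    qed
    have "\<mu> * \<sigma>M * X \<le> 2 * (sqrt m * lam)" using step1 by (simp add: algebra_simps)
    then have step2: "X \<le> 2 * (sqrt m * lam) / (\<mu> * \<sigma>M)" using mu \<sigma>Mpos
      by (simp add: pos_le_divide_eq mult.commute)
    have smq: "sqrt s * sqrt m = 4 * real s / \<mu>"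
    proof -
      have "real s * m = (4 * real s / \<mu>)\<^sup>2" unfolding m_def by (simp add: power2_eq_square field_simps)
      then have "sqrt s * sqrt m = sqrt ((4 * real s / \<mu>)\<^sup>2)" by (simp add: real_sqrt_mult[symmetric])
      then show ?thesis using mu by simp
    qed
    have num0: "0 \<le> 2 * (sqrt m * lam)" using lam0 m0 by simp
    have "bnorm1 d dt p \<Delta> \<le> 2 * (sqrt s * X)" using l1 SX by simp
    also have "\<dots> \<le> 2 * (sqrt s * (2 * (sqrt m * lam) / (\<mu> * \<sigma>M)))"
      using step2 by (intro mult_left_mono) auto
    also have "\<dots> \<le> 2 * (sqrt s * (2 * (sqrt m * lam) / (\<mu> * c5)))"
      using \<sigma>Mc5 mu c5 num0 by (intro mult_left_mono divide_left_mono) auto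
    also have "\<dots> = 4 * (sqrt s * sqrt m) * lam / (\<mu> * c5)" by (simp add: field_simps)
    also have "\<dots> = 16 / c5 * real s / \<mu>\<^sup>2 * lam" unfolding smq using mu c5
      by (simp add: field_simps power2_eq_square)
    finally show ?thesis unfolding \<Delta>_def lam_def by (simp add: algebra_simps)
  qed
qed



lemma final_lemma:
  fixes c5 C1 :: real and M :: "'a measure" and \<theta>0 G g0 R :: "nat \<Rightarrow> nat \<Rightarrow> real"
    and Gh gh0 :: "'a \<Rightarrow> nat \<Rightarrow> nat \<Rightarrow> real"
  assumes "c5 > 0" and "C1 > 0"
  and "prob_space M" and p1: "p \<ge> 1" and d1: "d \<ge> 1" and "dt \<ge> 1" and "L \<ge> 1" and "q = p * L"
  and sdef: "s = card {j. j < p \<and> block_fro d dt \<theta>0 j 0 \<noteq> 0}"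
  and eq0: "(\<forall>i < q * d. \<forall>k < dt. gfun G g0 (p * d) \<theta>0 i k + R i k = 0)"
  and e1: "\<epsilon>1 > 0" and "\<delta>1 > 0"
  and B1: "(\<exists>E \<in> sets M. measure M E \<ge> 1 - \<delta>1 \<and>
        (\<forall>\<omega> \<in> E. bmax d d q p (mdiff (Gh \<omega>) G) \<le> \<epsilon>1 \<and>
                   bmax d dt q 1 (mdiff (gh0 \<omega>) g0) \<le> \<epsilon>1))"
  and e2: "\<epsilon>2 > 0" and B2: "bmax d dt q 1 R \<le> \<epsilon>2"
  and g0: "\<gamma> \<ge> 0" and "\<delta>2 > 0"
  and B3: "(\<exists>E \<in> sets M. measure M E \<ge> 1 - \<delta>2 \<and>
        (\<forall>\<omega> \<in> E. bmax d dt q 1 (gfun (Gh \<omega>) (gh0 \<omega>) (p * d) \<theta>0) \<le> \<gamma>))"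
  and mu: "\<mu> > 0"
  and B4a: "sigma_max_m d p q (16 * real s / \<mu>\<^sup>2) G \<ge> c5"
  and B4b: "sigma_min_m d p q (16 * real s / \<mu>\<^sup>2) G / sigma_max_m d p q (16 * real s / \<mu>\<^sup>2) G \<ge> \<mu>"
  and Kb: "bnorm1 d dt p \<theta>0 \<le> K"
  and gC: "\<gamma> \<le> C1 * ((K + 1) * \<epsilon>1 + \<epsilon>2)"
  shows "(\<exists>E \<in> sets M. measure M E \<ge> 1 - (\<delta>1 + \<delta>2) \<and>
        (\<forall>\<omega> \<in> E. \<forall>\<theta>h. is_block_rmd p q d dt (Gh \<omega>) (gh0 \<omega>) \<gamma> \<theta>h \<longrightarrow>
           bnorm1 d dt p (mdiff \<theta>h \<theta>0) \<le> (16 * (C1 + 1) / c5) * real s / \<mu>\<^sup>2 * ((K + 1) * \<epsilon>1 + \<epsilon>2)))"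
proof -
  obtain E1 where E1: "E1 \<in> sets M" "measure M E1 \<ge> 1 - \<delta>1"
    "\<forall>\<omega> \<in> E1. bmax d d q p (mdiff (Gh \<omega>) G) \<le> \<epsilon>1 \<and> bmax d dt q 1 (mdiff (gh0 \<omega>) g0) \<le> \<epsilon>1"
    using B1 by blast
  obtain E2 where E2: "E2 \<in> sets M" "measure M E2 \<ge> 1 - \<delta>2"
    "\<forall>\<omega> \<in> E2. bmax d dt q 1 (gfun (Gh \<omega>) (gh0 \<omega>) (p * d) \<theta>0) \<le> \<gamma>"
    using B3 by blast
  have meas: "measure M (E1 \<inter> E2) \<ge> 1 - (\<delta>1 + \<delta>2)"
    using prob_Int_ge[OF \<open>prob_space M\<close> E1(1) E2(1)] E1(2) E2(2) by linarith
  have bound: "bnorm1 d dt p (mdiff \<theta>h \<theta>0) \<le> (16 * (C1 + 1) / c5) * real s / \<mu>\<^sup>2 * ((K + 1) * \<epsilon>1 + \<epsilon>2)"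
    if \<omega>: "\<omega> \<in> E1 \<inter> E2" and rmd: "is_block_rmd p q d dt (Gh \<omega>) (gh0 \<omega>) \<gamma> \<theta>h" for \<omega> \<theta>h
  proof -
    define Xb where "Xb = (K + 1) * \<epsilon>1 + \<epsilon>2"
    have "bnorm1 d dt p (mdiff \<theta>h \<theta>0) \<le> 16 / c5 * real s / \<mu>\<^sup>2 * (\<gamma> + (K + 1) * \<epsilon>1 + \<epsilon>2)"
      by (rule main_det[OF p1 d1 \<open>c5 > 0\<close> sdef eq0 e1 e2 g0 _ _ B2 _ mu B4a B4b Kb rmd])
         (use E1(3) E2(3) \<omega> in auto)
    also have "\<dots> = 16 / c5 * real s / \<mu>\<^sup>2 * (\<gamma> + Xb)" unfolding Xb_def by simp
    also have "\<dots> \<le> 16 / c5 * real s / \<mu>\<^sup>2 * ((C1 + 1) * Xb)"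
      using gC \<open>c5 > 0\<close> unfolding Xb_def by (intro mult_left_mono) (auto simp: algebra_simps)
    also have "\<dots> = (16 * (C1 + 1) / c5) * real s / \<mu>\<^sup>2 * Xb" by (simp add: field_simps)
    finally show ?thesis unfolding Xb_def .
  qed
  show ?thesis
    using E1(1) E2(1) meas bound by (intro bexI[of _ "E1 \<inter> E2"]) auto
qed

theorem theorem3:
  fixes c5 C1 :: real
  assumes "c5 > 0" and "C1 > 0"
  shows "\<exists>C2::real. \<forall>(M :: 'a measure) p d dt L q (\<theta>0 :: nat \<Rightarrow> nat \<Rightarrow> real) G g0 R
      (Gh :: 'a \<Rightarrow> nat \<Rightarrow> nat \<Rightarrow> real) (gh0 :: 'a \<Rightarrow> nat \<Rightarrow> nat \<Rightarrow> real)
      \<epsilon>1 \<delta>1 \<epsilon>2 \<delta>2 \<gamma> \<mu> K s.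
    prob_space M \<longrightarrow>
    p \<ge> 1 \<longrightarrow> d \<ge> 1 \<longrightarrow> dt \<ge> 1 \<longrightarrow> L \<ge> 1 \<longrightarrow> q = p * L \<longrightarrow>
    s = card {j. j < p \<and> block_fro d dt \<theta>0 j 0 \<noteq> 0} \<longrightarrow>
    (\<forall>i < q * d. \<forall>k < dt. gfun G g0 (p * d) \<theta>0 i k + R i k = 0) \<longrightarrow>
    \<comment> \<open>(B1)\<close>
    \<epsilon>1 > 0 \<longrightarrow> \<delta>1 > 0 \<longrightarrow>
    (\<exists>E \<in> sets M. measure M E \<ge> 1 - \<delta>1 \<and>
        (\<forall>\<omega> \<in> E. bmax d d q p (mdiff (Gh \<omega>) G) \<le> \<epsilon>1 \<and>
                   bmax d dt q 1 (mdiff (gh0 \<omega>) g0) \<le> \<epsilon>1)) \<longrightarrow>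
    \<comment> \<open>(B2)\<close>
    \<epsilon>2 > 0 \<longrightarrow> bmax d dt q 1 R \<le> \<epsilon>2 \<longrightarrow>
    \<comment> \<open>(B3)\<close>
    \<gamma> \<ge> 0 \<longrightarrow> \<delta>2 > 0 \<longrightarrow>
    (\<exists>E \<in> sets M. measure M E \<ge> 1 - \<delta>2 \<and>
        (\<forall>\<omega> \<in> E. bmax d dt q 1 (gfun (Gh \<omega>) (gh0 \<omega>) (p * d) \<theta>0) \<le> \<gamma>)) \<longrightarrow>
    \<comment> \<open>(B4)\<close>
    \<mu> > 0 \<longrightarrow>
    sigma_max_m d p q (16 * real s / \<mu>\<^sup>2) G \<ge> c5 \<longrightarrow>
    sigma_min_m d p q (16 * real s / \<mu>\<^sup>2) G / sigma_max_m d p q (16 * real s / \<mu>\<^sup>2) G \<ge> \<mu> \<longrightarrow>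
    \<comment> \<open>size of theta0 and choice of gamma\<close>
    bnorm1 d dt p \<theta>0 \<le> K \<longrightarrow>
    \<gamma> \<le> C1 * ((K + 1) * \<epsilon>1 + \<epsilon>2) \<longrightarrow>
    (\<exists>E \<in> sets M. measure M E \<ge> 1 - (\<delta>1 + \<delta>2) \<and>
        (\<forall>\<omega> \<in> E. \<forall>\<theta>h. is_block_rmd p q d dt (Gh \<omega>) (gh0 \<omega>) \<gamma> \<theta>h \<longrightarrow>
           bnorm1 d dt p (mdiff \<theta>h \<theta>0) \<le> C2 * real s / \<mu>\<^sup>2 * ((K + 1) * \<epsilon>1 + \<epsilon>2)))"
  by (intro exI[of _ "16 * (C1 + 1) / c5"] allI impI, rule final_lemma[OF assms]) assumption+


end
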